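(* Let $d\ge1$, $t\ge1$ be integers and let $\mu_t$ be a finite Borel measure on $\mathbb S^d$ satisfying the lower Marcinkiewicz–Zygmund inequality of order $t$ with constant $a>0$, i.e. $a\|f\|_{L^2(\mathbb S^d)}^2\le\int_{\mathbb S^d}|f|^2\,d\mu_t$ for all $f\in\Pi_t$. Let $r\in(0,\pi/2]$ and $x\in\mathbb S^d$. If $\operatorname{supp}\mu_t\subseteq B_r(x)$, then \[ (\sin r)^{2t}\ge \frac{a}{\mu_t(\mathbb S^d)}\,\Lambda_{d,t},\qquad\text{where }\Lambda_{d,t}:=\int_{\mathbb S^d}(x\cdot y)^{2t}\,dy . \]
   Context: $\mathbb S^d\subset\mathbb R^{d+1}$ is the unit sphere with normalized surface measure $dy$ (total mass $1$); $\Lambda_{d,t}$ does not depend on $x\in\mathbb S^d$. $B_r(x)=\{y\in\mathbb S^d:x\cdot y\ge\cos r\}$. $\Pi_t$ is the space of restrictions to $\mathbb S^d$ of polynomials in $d+1$ variables of degree at most $t$. *)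

theory Defs
  imports "HOL-Analysis.Analysis"
begin

text \<open>Ambient space R^(d+1) is real^'n with CARD('n) = d+1.\<close>

text \<open>Normalized surface measure on the unit sphere: the radial projection of the
  normalized Lebesgue measure on the unit ball (this is the rotation-invariant
  probability measure on the sphere, i.e. normalized surface measure).\<close>
definition sphere_measure :: "(real^'n) measure" where
  "sphere_measure = distr (uniform_measure lborel (ball 0 1)) borel (\<lambda>x. x /\<^sub>R norm x)"

definition cap :: "real^'n \<Rightarrow> real \<Rightarrow> (real^'n) set" where
  "cap x r = {y \<in> sphere 0 1. x \<bullet> y \<ge> cos r}"

definition poly_deg_le :: "nat \<Rightarrow> (real^'n \<Rightarrow> real) \<Rightarrow> bool" where
  "poly_deg_le t f \<longleftrightarrow> (\<exists>c :: ('n \<Rightarrow> nat) \<Rightarrow> real.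
      \<forall>x. f x = (\<Sum>\<alpha>\<in>{\<alpha>. (\<Sum>i\<in>UNIV. \<alpha> i) \<le> t}. c \<alpha> * (\<Prod>i\<in>UNIV. (x$i) ^ \<alpha> i)))"

definition measure_support :: "'a::topological_space measure \<Rightarrow> 'a set" where
  "measure_support M = {y. \<forall>U. open U \<longrightarrow> y \<in> U \<longrightarrow> emeasure M U > 0}"

end

theory Submission imports Defs begin

typedef 'a wo = "UNIV :: 'a set" by simp

definition wo_key :: "'a::finite \<Rightarrow> nat" where "wo_key = (SOME f. inj f)"

lemma inj_wo_key: "inj (wo_key :: 'a::finite \<Rightarrow> nat)"
proof -
  have "countable (UNIV :: 'a set)" by (rule countable_finite) simp
  then have "\<exists>f::'a \<Rightarrow> nat. inj f" unfolding countable_def by blast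
  then show ?thesis unfolding wo_key_def by (rule someI_ex)
qed

instance wo :: (finite) finite
proof
  have "(UNIV :: 'a wo set) = Abs_wo ` UNIV"
    by (metis Abs_wo_cases surj_def)
  then show "finite (UNIV :: 'a wo set)" by (metis finite finite_imageI)
qed

instantiation wo :: (finite) linorder
begin
definition less_eq_wo :: "'a wo \<Rightarrow> 'a wo \<Rightarrow> bool" where
  "less_eq_wo a b \<longleftrightarrow> wo_key (Rep_wo a) \<le> wo_key (Rep_wo b)"
definition less_wo :: "'a wo \<Rightarrow> 'a wo \<Rightarrow> bool" where
  "less_wo a b \<longleftrightarrow> wo_key (Rep_wo a) < wo_key (Rep_wo b)"
instance
proof
  fix x y z :: "'a wo"
  show "(x < y) = (x \<le> y \<and> \<not> y \<le> x)" by (auto simp: less_eq_wo_def less_wo_def)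
  show "x \<le> x" by (simp add: less_eq_wo_def)
  show "x \<le> y \<Longrightarrow> y \<le> z \<Longrightarrow> x \<le> z" by (simp add: less_eq_wo_def)
  show "x \<le> y \<Longrightarrow> y \<le> x \<Longrightarrow> x = y"
    using inj_wo_key[where 'a='a] by (simp add: less_eq_wo_def inj_eq Rep_wo_inject)
  show "x \<le> y \<or> y \<le> x" by (auto simp: less_eq_wo_def)
qed
end

instance wo :: (finite) wellorder
proof
  fix P :: "'a wo \<Rightarrow> bool" and a
  assume H: "\<And>x. (\<And>y. y < x \<Longrightarrow> P y) \<Longrightarrow> P x"
  have "\<And>a. wo_key (Rep_wo a) = n \<Longrightarrow> P a" for n
  proof (induction n rule: less_induct)
    case (less n)
    show ?case by (rule H) (use less in \<open>auto simp: less_wo_def\<close>)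
  qed
  then show "P a" by blast
qed

definition towo :: "real^'n \<Rightarrow> real^('n wo)" where "towo v = (\<chi> j. v $ Rep_wo j)"
definition fromwo :: "real^('n wo) \<Rightarrow> real^'n" where "fromwo w = (\<chi> i. w $ Abs_wo i)"

lemma from_to_wo[simp]: "fromwo (towo v) = v"
  by (simp add: fromwo_def towo_def Abs_wo_inverse vec_eq_iff)
lemma to_from_wo[simp]: "towo (fromwo w) = w"
  by (simp add: fromwo_def towo_def Rep_wo_inverse vec_eq_iff)

lemma linear_towo: "linear towo"
  by (rule linearI) (auto simp: towo_def vec_eq_iff)
lemma linear_fromwo: "linear fromwo"
  by (rule linearI) (auto simp: fromwo_def vec_eq_iff)

lemma sum_wo: "(\<Sum>j\<in>UNIV. f (Rep_wo j)) = (\<Sum>i\<in>UNIV. f i)"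
  by (rule sum.reindex_bij_witness[where j=Rep_wo and i=Abs_wo])
     (auto simp: Abs_wo_inverse Rep_wo_inverse)
lemma prod_wo: "(\<Prod>j\<in>UNIV. f (Rep_wo j)) = (\<Prod>i\<in>UNIV. f i)"
  by (rule prod.reindex_bij_witness[where j=Rep_wo and i=Abs_wo])
     (auto simp: Abs_wo_inverse Rep_wo_inverse)

lemma prod_wo2: "(\<Prod>i\<in>UNIV. f (Abs_wo i)) = (\<Prod>j\<in>UNIV. f j)"
  by (rule prod.reindex_bij_witness[where j=Abs_wo and i=Rep_wo])
     (auto simp: Abs_wo_inverse Rep_wo_inverse)

lemma inner_towo: "towo v \<bullet> towo w = v \<bullet> w"
  unfolding inner_vec_def towo_def using sum_wo[of "\<lambda>i. v $ i * w $ i"] by simp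

lemma inner_fromwo: "fromwo v \<bullet> fromwo w = v \<bullet> w"
  by (metis inner_towo to_from_wo)

lemma meas_towo: "towo \<in> borel_measurable borel"
  by (intro borel_measurable_continuous_onI linear_continuous_on linear_conv_bounded_linear[THEN iffD1] linear_towo)
lemma meas_fromwo: "fromwo \<in> borel_measurable borel"
  by (intro borel_measurable_continuous_onI linear_continuous_on linear_conv_bounded_linear[THEN iffD1] linear_fromwo)

lemma prod_Basis_cart: "(\<Prod>b\<in>Basis. (v::real^'n) \<bullet> b) = (\<Prod>i\<in>UNIV. v $ i)"
  by (simp add: Basis_vec_def cart_eq_inner_axis axis_eq_axis prod.UNION_disjoint)

lemma distr_towo: "distr lborel borel (towo :: real^'n \<Rightarrow> _) = lborel"
proof (rule lborel_eqI[symmetric])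
  fix l u :: "real^('n wo)"
  assume le: "\<And>b. b \<in> Basis \<Longrightarrow> l \<bullet> b \<le> u \<bullet> b"
  have pre: "towo -` box l u = box (fromwo l) (fromwo u)"
  proof (rule set_eqI, rule iffI)
    fix x assume "x \<in> towo -` box l u"
    then have "\<And>j. l $ j < x $ Rep_wo j \<and> x $ Rep_wo j < u $ j" by (simp add: mem_box_cart towo_def)
    from this[of "Abs_wo i" for i] show "x \<in> box (fromwo l) (fromwo u)"
      by (simp add: mem_box_cart fromwo_def Abs_wo_inverse)
  next
    fix x assume "x \<in> box (fromwo l) (fromwo u)"
    then have "\<And>i. l $ Abs_wo i < x $ i \<and> x $ i < u $ Abs_wo i" by (simp add: mem_box_cart fromwo_def)
    from this[of "Rep_wo j" for j] show "x \<in> towo -` box l u"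
      by (simp add: mem_box_cart towo_def Rep_wo_inverse)
  qed
  have le2: "\<forall>b\<in>Basis. fromwo l \<bullet> b \<le> fromwo u \<bullet> b"
  proof
    fix b :: "real^'n" assume "b \<in> Basis"
    then obtain i where b: "b = axis i 1" by (auto simp: Basis_vec_def)
    have "l \<bullet> axis (Abs_wo i) 1 \<le> u \<bullet> axis (Abs_wo i) 1" by (rule le) (auto simp: Basis_vec_def)
    then show "fromwo l \<bullet> b \<le> fromwo u \<bullet> b" by (simp add: b inner_axis fromwo_def)
  qed
  have "emeasure (distr lborel borel towo) (box l u) = emeasure lborel (box (fromwo l) (fromwo u))"
  proof -
    have m: "towo \<in> measurable lborel borel" using meas_towo by simp
    show ?thesis by (simp add: emeasure_distr[OF m] pre)
  qed
  also have "\<dots> = (\<Prod>i\<in>UNIV. (fromwo u - fromwo l) $ i)"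
    using le2 by (simp add: emeasure_lborel_box_eq prod_Basis_cart)
  also have "\<dots> = (\<Prod>j\<in>UNIV. (u - l) $ j)"
    using prod_wo2[of "\<lambda>j. (u - l) $ j"] by (simp add: fromwo_def)
  finally show "emeasure (distr lborel borel towo) (box l u) = (\<Prod>b\<in>Basis. (u - l) \<bullet> b)"
    by (simp add: prod_Basis_cart)
qed simp


lemma distr_orth_wo:
  fixes Q :: "real^'m::{finite,wellorder} \<Rightarrow> real^'m::_"
  assumes Q: "orthogonal_transformation Q"
  shows "distr lborel borel Q = lborel"
proof (rule lborel_eqI[symmetric])
  fix l u :: "real^'m::{finite,wellorder}"
  assume le: "\<And>b. b \<in> Basis \<Longrightarrow> l \<bullet> b \<le> u \<bullet> b"
  let ?S = "box l u"
  have lin: "linear Q" using Q by (simp add: orthogonal_transformation_linear)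
  have mQ: "Q \<in> borel_measurable borel"
    by (intro borel_measurable_continuous_onI linear_continuous_on linear_conv_bounded_linear[THEN iffD1] lin)
  then have m: "Q \<in> measurable lborel borel" by simp
  have QI: "orthogonal_transformation (inv Q)" using Q by (rule orthogonal_transformation_inv)
  have bij: "bij Q" using Q by (rule orthogonal_transformation_bij)
  have pre: "Q -` ?S = inv Q ` ?S" using bij by (simp add: bij_vimage_eq_inv_image)
  have Sb: "Q -` ?S \<in> sets lborel" using mQ by (simp add: measurable_sets_borel)
  have bd: "bounded (Q -` ?S)"
    unfolding pre using QI
    by (intro bounded_linear_image bounded_box) (simp add: orthogonal_transformation_linear linear_conv_bounded_linear[symmetric])
  have "measure lborel (Q -` ?S) = measure lebesgue (Q -` ?S)" using Sb by simp
  also have "\<dots> = measure lebesgue ?S" unfolding pre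
    by (rule measure_orthogonal_image[OF QI]) simp
  also have "\<dots> = measure lborel ?S" by simp
  finally have meq: "measure lborel (Q -` ?S) = measure lborel ?S" .
  have "emeasure (distr lborel borel Q) ?S = emeasure lborel (Q -` ?S)"
    by (simp add: emeasure_distr[OF m])
  also have "\<dots> = ennreal (measure lborel (Q -` ?S))"
    using emeasure_bounded_finite[OF bd] by (intro emeasure_eq_ennreal_measure) simp
  also have "\<dots> = emeasure lborel ?S" unfolding meq using emeasure_lborel_box_finite[of l u] by (intro emeasure_eq_ennreal_measure[symmetric]) simp
  also have "\<dots> = (\<Prod>b\<in>Basis. (u - l) \<bullet> b)" using le by (simp add: emeasure_lborel_box_eq)
  finally show "emeasure (distr lborel borel Q) ?S = (\<Prod>b\<in>Basis. (u - l) \<bullet> b)" .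
qed simp


lemma lin_meas: "linear f \<Longrightarrow> f \<in> borel_measurable borel"
  for f :: "'a::euclidean_space \<Rightarrow> 'b::euclidean_space"
  by (intro borel_measurable_continuous_onI linear_continuous_on linear_conv_bounded_linear[THEN iffD1])

lemma distr_fromwo: "distr lborel borel (fromwo :: real^('n wo) \<Rightarrow> real^'n) = lborel"
proof -
  have "distr (distr lborel borel (towo :: real^'n \<Rightarrow> _)) borel fromwo = distr lborel borel (fromwo \<circ> towo)"
    using meas_towo meas_fromwo by (intro distr_distr) auto
  also have "fromwo \<circ> towo = (\<lambda>x. x)" by (simp add: fun_eq_iff)
  also have "distr lborel borel (\<lambda>x::real^'n. x) = lborel" by (rule distr_id2) simp
  finally show ?thesis by (simp add: distr_towo)
qed

lemma distr_orth:
  fixes Q :: "real^'n \<Rightarrow> real^'n"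
  assumes Q: "orthogonal_transformation Q"
  shows "distr lborel borel Q = lborel"
proof -
  define Q' where "Q' = towo \<circ> Q \<circ> fromwo"
  have linQ: "linear Q" using Q by (simp add: orthogonal_transformation_linear)
  have Q': "orthogonal_transformation Q'"
    unfolding orthogonal_transformation_def Q'_def
    using Q linQ linear_towo linear_fromwo
    by (auto simp: inner_towo orthogonal_transformation_def inner_fromwo intro!: linear_compose)
  have linQ': "linear Q'" using Q' by (simp add: orthogonal_transformation_linear)
  have eq: "Q = fromwo \<circ> (Q' \<circ> towo)" by (simp add: Q'_def fun_eq_iff)
  have "distr lborel borel Q = distr (distr lborel borel (Q' \<circ> towo)) borel fromwo"
    unfolding eq using meas_fromwo measurable_comp[OF meas_towo lin_meas[OF linQ']]
    by (intro distr_distr[symmetric]) auto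
  also have "distr lborel borel (Q' \<circ> towo) = distr (distr lborel borel towo) borel Q'"
    using lin_meas[OF linQ'] meas_towo by (intro distr_distr[symmetric]) auto
  also have "\<dots> = lborel" by (simp add: distr_towo distr_orth_wo[OF Q'])
  finally show ?thesis by (simp add: distr_fromwo)
qed


lemma distr_unif_orth:
  fixes R :: "real^'n \<Rightarrow> real^'n"
  assumes R: "orthogonal_transformation R"
  shows "distr (uniform_measure lborel (ball 0 1)) borel R = uniform_measure lborel (ball 0 1)"
proof (rule measure_eqI)
  let ?U = "uniform_measure lborel (ball (0::real^'n) 1)"
  have linR: "linear R" using R by (simp add: orthogonal_transformation_linear)
  have mR: "R \<in> measurable ?U borel" using lin_meas[OF linR] by simp
  show "sets (distr ?U borel R) = sets ?U" by simp
  fix A assume "A \<in> sets (distr ?U borel R)"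
  then have A: "A \<in> sets borel" by simp
  have pb: "R -` ball 0 1 = ball 0 1" using orthogonal_transformation_norm[OF R] by auto
  have e: "emeasure lborel (R -` X) = emeasure lborel X" if "X \<in> sets borel" for X
  proof -
    have "emeasure (distr lborel borel R) X = emeasure lborel (R -` X)"
      using lin_meas[OF linR] that by (simp add: emeasure_distr)
    then show ?thesis by (simp add: distr_orth[OF R])
  qed
  have "emeasure (distr ?U borel R) A = emeasure ?U (R -` A)"
    using mR A by (simp add: emeasure_distr)
  also have "\<dots> = emeasure lborel (ball 0 1 \<inter> R -` A) / emeasure lborel (ball (0::real^'n) 1)"
    using lin_meas[OF linR] A by (subst emeasure_uniform_measure) (auto simp: measurable_sets_borel)
  also have "ball 0 1 \<inter> R -` A = R -` (ball 0 1 \<inter> A)" using pb by auto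
  also have "emeasure lborel \<dots> = emeasure lborel (ball 0 1 \<inter> A)" using A by (intro e) auto
  also have "\<dots> / emeasure lborel (ball (0::real^'n) 1) = emeasure ?U A"
    using A by simp
  finally show "emeasure (distr ?U borel R) A = emeasure ?U A" .
qed

lemma meas_proj: "(\<lambda>x::real^'n. x /\<^sub>R norm x) \<in> borel_measurable borel"
  by measurable

lemma distr_sphere_orth:
  fixes R :: "real^'n \<Rightarrow> real^'n"
  assumes R: "orthogonal_transformation R"
  shows "distr sphere_measure borel R = sphere_measure"
proof -
  let ?U = "uniform_measure lborel (ball (0::real^'n) 1)"
  let ?p = "\<lambda>x::real^'n. x /\<^sub>R norm x"
  have linR: "linear R" using R by (simp add: orthogonal_transformation_linear)
  have mp: "?p \<in> measurable ?U borel" using meas_proj by simp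
  have mR: "R \<in> measurable borel borel" using lin_meas[OF linR] by simp
  have mR': "R \<in> measurable ?U borel" using lin_meas[OF linR] by simp
  have comm: "R \<circ> ?p = ?p \<circ> R"
    by (simp add: fun_eq_iff orthogonal_transformation_norm[OF R] orthogonal_transformation_scaleR[OF R])
  have "distr sphere_measure borel R = distr (distr ?U borel ?p) borel R"
    by (simp add: sphere_measure_def)
  also have "\<dots> = distr ?U borel (R \<circ> ?p)" by (rule distr_distr[OF mR mp])
  also have "\<dots> = distr ?U borel (?p \<circ> R)" by (simp only: comm)
  also have "\<dots> = distr (distr ?U borel R) borel ?p"
    using meas_proj by (intro distr_distr[symmetric] mR') simp
  also have "\<dots> = sphere_measure" by (simp add: distr_unif_orth[OF R] sphere_measure_def)
  finally show ?thesis .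
qed


definition mono_cart :: "('n::finite \<Rightarrow> nat) \<Rightarrow> real^'n \<Rightarrow> real" where
  "mono_cart \<alpha> y = (\<Prod>i\<in>UNIV. (y$i) ^ \<alpha> i)"

abbreviation idx :: "nat \<Rightarrow> ('n::finite \<Rightarrow> nat) set" where
  "idx n \<equiv> {\<alpha>. (\<Sum>i\<in>UNIV. \<alpha> i) \<le> n}"

lemma finite_idx: "finite (idx n :: ('n::finite \<Rightarrow> nat) set)"
proof -
  have "idx n \<subseteq> (Pi\<^sub>E (UNIV::'n set) (\<lambda>_. {..n}))"
  proof
    fix \<alpha> :: "'n \<Rightarrow> nat" assume a: "\<alpha> \<in> idx n"
    have "\<alpha> i \<le> n" for i
      using a member_le_sum[of i UNIV \<alpha>] by simp
    then show "\<alpha> \<in> Pi\<^sub>E UNIV (\<lambda>_. {..n})" by (simp add: PiE_UNIV_domain)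
  qed
  moreover have "finite (Pi\<^sub>E (UNIV::'n set) (\<lambda>_. {..n}))" by (intro finite_PiE) auto
  ultimately show ?thesis by (rule finite_subset)
qed

lemma poly_deg_le_mono: "poly_deg_le t f \<longleftrightarrow> (\<exists>c. \<forall>x. f x = (\<Sum>\<alpha>\<in>idx t. c \<alpha> * mono_cart \<alpha> x))"
  by (simp add: poly_deg_le_def mono_cart_def)

lemma poly_one: "poly_deg_le 0 (\<lambda>y::real^'n. 1)"
proof -
  have "idx 0 = {(\<lambda>_. 0) :: 'n \<Rightarrow> nat}" by (auto simp: fun_eq_iff)
  then show ?thesis unfolding poly_deg_le_mono
    by (intro exI[of _ "\<lambda>_. 1"]) (simp add: mono_cart_def)
qed

definition ei :: "'n \<Rightarrow> 'n \<Rightarrow> nat" where "ei i = (\<lambda>j. if j = i then 1 else 0)"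

lemma sum_ei: "(\<Sum>j\<in>UNIV. ei i j) = (1::nat)" for i :: "'n::finite"
  by (simp add: ei_def)

lemma mono_ei: "mono_cart (\<lambda>j. \<alpha> j + ei i j) y = y $ i * mono_cart \<alpha> y"
proof -
  have "mono_cart (\<lambda>j. \<alpha> j + ei i j) y = mono_cart \<alpha> y * (\<Prod>j\<in>UNIV. (y$j) ^ ei i j)"
    by (simp add: mono_cart_def power_add prod.distrib)
  also have "(\<Prod>j\<in>UNIV. (y$j) ^ ei i j) = y $ i"
    by (simp add: ei_def if_distrib prod.delta cong: if_cong)
  finally show ?thesis by simp
qed

lemma reindex_ei:
  fixes i :: "'n::finite"
  shows "(\<Sum>\<alpha>\<in>idx n. h (\<lambda>j. \<alpha> j + ei i j) \<alpha>) =
         (\<Sum>\<gamma>\<in>{\<gamma>\<in>idx (Suc n). \<gamma> i \<ge> 1}. h \<gamma> (\<lambda>j. \<gamma> j - ei i j))"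
proof (rule sum.reindex_bij_witness[where j="\<lambda>\<alpha> j. \<alpha> j + ei i j" and i="\<lambda>\<gamma> j. \<gamma> j - ei i j"])
  fix \<alpha> :: "'n \<Rightarrow> nat" assume a: "\<alpha> \<in> idx n"
  show "(\<lambda>j. \<alpha> j + ei i j - ei i j) = \<alpha>" by simp
  have "(\<Sum>j\<in>UNIV. \<alpha> j + ei i j) = (\<Sum>j\<in>UNIV. \<alpha> j) + 1"
    by (simp add: sum.distrib sum_ei)
  then show "(\<lambda>j. \<alpha> j + ei i j) \<in> {\<gamma> \<in> idx (Suc n). 1 \<le> \<gamma> i}"
    using a by (simp add: ei_def)
  show "h (\<lambda>j. \<alpha> j + ei i j) (\<lambda>j. \<alpha> j + ei i j - ei i j) = h (\<lambda>j. \<alpha> j + ei i j) \<alpha>" by simp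
next
  fix \<gamma> :: "'n \<Rightarrow> nat" assume g: "\<gamma> \<in> {\<gamma> \<in> idx (Suc n). 1 \<le> \<gamma> i}"
  have e: "\<gamma> j - ei i j + ei i j = \<gamma> j" for j using g by (auto simp: ei_def)
  then show "(\<lambda>j. \<gamma> j - ei i j + ei i j) = \<gamma>" by simp
  have "(\<Sum>j\<in>UNIV. \<gamma> j - ei i j) + 1 = (\<Sum>j\<in>UNIV. \<gamma> j)"
    using sum.distrib[of "\<lambda>j. \<gamma> j - ei i j" "ei i" UNIV] by (simp add: e sum_ei)
  then show "(\<lambda>j. \<gamma> j - ei i j) \<in> idx n" using g by simp
qed

lemma poly_step:
  assumes "poly_deg_le n f"
  shows "poly_deg_le (Suc n) (\<lambda>y::real^'n. (z \<bullet> y) * f y)"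
proof -
  obtain c where c: "\<And>x. f x = (\<Sum>\<alpha>\<in>idx n. c \<alpha> * mono_cart \<alpha> x)"
    using assms unfolding poly_deg_le_mono by blast
  define c' where "c' \<gamma> = (\<Sum>i\<in>UNIV. if \<gamma> i \<ge> 1 then z $ i * c (\<lambda>j. \<gamma> j - ei i j) else 0)" for \<gamma>
  have "(z \<bullet> y) * f y = (\<Sum>\<gamma>\<in>idx (Suc n). c' \<gamma> * mono_cart \<gamma> y)" for y
  proof -
    have "(z \<bullet> y) * f y = (\<Sum>i\<in>UNIV. \<Sum>\<alpha>\<in>idx n. z $ i * c \<alpha> * (y $ i * mono_cart \<alpha> y))"
      by (simp add: c inner_vec_def sum_distrib_left sum_distrib_right mult_ac) (rule sum.swap)
    also have "\<dots> = (\<Sum>i\<in>UNIV. \<Sum>\<alpha>\<in>idx n. z $ i * c \<alpha> * mono_cart (\<lambda>j. \<alpha> j + ei i j) y)"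
      by (simp add: mono_ei)
    also have "\<dots> = (\<Sum>i\<in>UNIV. \<Sum>\<gamma>\<in>{\<gamma>\<in>idx (Suc n). \<gamma> i \<ge> 1}. z $ i * c (\<lambda>j. \<gamma> j - ei i j) * mono_cart \<gamma> y)"
    proof (rule sum.cong[OF refl])
      fix i show "(\<Sum>\<alpha>\<in>idx n. z $ i * c \<alpha> * mono_cart (\<lambda>j. \<alpha> j + ei i j) y) =
         (\<Sum>\<gamma>\<in>{\<gamma>\<in>idx (Suc n). \<gamma> i \<ge> 1}. z $ i * c (\<lambda>j. \<gamma> j - ei i j) * mono_cart \<gamma> y)"
        using reindex_ei[where h="\<lambda>\<gamma> \<alpha>. z $ i * c \<alpha> * mono_cart \<gamma> y" and n=n and i=i] by simp
    qed
    also have "\<dots> = (\<Sum>i\<in>UNIV. \<Sum>\<gamma>\<in>idx (Suc n). (if \<gamma> i \<ge> 1 then z $ i * c (\<lambda>j. \<gamma> j - ei i j) else 0) * mono_cart \<gamma> y)"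
    proof (rule sum.cong[OF refl])
      fix i
      show "(\<Sum>\<gamma>\<in>{\<gamma>\<in>idx (Suc n). \<gamma> i \<ge> 1}. z $ i * c (\<lambda>j. \<gamma> j - ei i j) * mono_cart \<gamma> y) =
        (\<Sum>\<gamma>\<in>idx (Suc n). (if \<gamma> i \<ge> 1 then z $ i * c (\<lambda>j. \<gamma> j - ei i j) else 0) * mono_cart \<gamma> y)"
        by (subst sum.inter_filter[OF finite_idx]) (intro sum.cong refl, simp)
    qed
    also have "\<dots> = (\<Sum>\<gamma>\<in>idx (Suc n). c' \<gamma> * mono_cart \<gamma> y)"
      by (subst sum.swap) (simp add: c'_def sum_distrib_right)
    finally show ?thesis .
  qed
  then show ?thesis unfolding poly_deg_le_mono by blast
qed

lemma poly_power_lin: "poly_deg_le t (\<lambda>y::real^'n. (z \<bullet> y) ^ t)"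
proof (induction t)
  case 0 then show ?case using poly_one by simp
next
  case (Suc t) then show ?case using poly_step[OF Suc, of z] by simp
qed


lemma cap_bound:
  fixes x z y :: "real^'n"
  assumes x: "norm x = 1" and z: "norm z = 1" and xz: "x \<bullet> z = 0"
    and r: "0 < r" "r \<le> pi/2" and y: "y \<in> cap x r"
  shows "(z \<bullet> y) ^ (2*t) \<le> sin r ^ (2*t)"
proof -
  have ny: "y \<bullet> y = 1" using y by (simp add: cap_def dot_square_norm)
  have nx: "x \<bullet> x = 1" using x by (simp add: dot_square_norm)
  have nz: "z \<bullet> z = 1" using z by (simp add: dot_square_norm)
  have xy: "x \<bullet> y \<ge> cos r" using y by (simp add: cap_def)
  have c0: "cos r \<ge> 0" using r by (intro cos_ge_zero) auto
  let ?w = "y - (x \<bullet> y) *\<^sub>R x - (z \<bullet> y) *\<^sub>R z"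
  have "0 \<le> ?w \<bullet> ?w" by simp
  also have "?w \<bullet> ?w = y \<bullet> y - (x \<bullet> y)^2 - (z \<bullet> y)^2"
    using nx nz xz
    by (simp add: inner_diff_left inner_diff_right inner_commute power2_eq_square algebra_simps)
  finally have "(z \<bullet> y)^2 \<le> 1 - (x \<bullet> y)^2" using ny by simp
  also have "\<dots> \<le> 1 - (cos r)^2" using xy c0 by (simp add: power_mono)
  also have "\<dots> = (sin r)^2" by (simp add: sin_squared_eq)
  finally have "(z \<bullet> y)^2 \<le> (sin r)^2" .
  then have "((z \<bullet> y)^2)^t \<le> ((sin r)^2)^t" by (rule power_mono) auto
  then show ?thesis by (simp add: power_mult)
qed

lemma sets_sphere: "sets sphere_measure = sets borel"
  by (simp add: sphere_measure_def)

lemma support_AE: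
  fixes \<mu> :: "'a::second_countable_topology measure"
  assumes borel_mu: "sets \<mu> = sets borel"
  shows "AE y in \<mu>. y \<in> measure_support \<mu>"
proof -
  let ?F = "{U. open U \<and> emeasure \<mu> U = 0}"
  obtain F' where F': "F' \<subseteq> ?F" "countable F'" "\<Union>F' = \<Union>?F"
    using Lindelof[of ?F] by blast
  have N: "\<Union>(id ` F') \<in> null_sets \<mu>"
  proof (rule null_sets_UN')
    show "countable F'" by fact
    fix U assume "U \<in> F'"
    then have "open U" "emeasure \<mu> U = 0" using F' by auto
    then show "id U \<in> null_sets \<mu>" using borel_mu by (auto intro: null_setsI)
  qed
  show ?thesis
  proof (rule AE_I'[OF N])
    show "{y \<in> space \<mu>. y \<notin> measure_support \<mu>} \<subseteq> \<Union>(id ` F')"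
    proof
      fix y assume "y \<in> {y \<in> space \<mu>. y \<notin> measure_support \<mu>}"
      then obtain U where "open U" "y \<in> U" "\<not> emeasure \<mu> U > 0"
        by (auto simp: measure_support_def)
      then have "y \<in> \<Union>?F" by (auto simp: not_less)
      then show "y \<in> \<Union>(id ` F')" using F' by simp
    qed
  qed
qed

theorem lemma4p2:
  fixes \<mu> :: "(real^'n) measure" and t :: nat and a r :: real and x :: "real^'n"
  assumes d_ge_1: "CARD('n) \<ge> 2"
    and t_ge_1: "t \<ge> 1"
    and borel_mu: "sets \<mu> = sets borel"
    and finite_mu: "finite_measure \<mu>"
    and on_sphere: "emeasure \<mu> (UNIV - sphere 0 1) = 0"
    and a_pos: "a > 0"
    and MZ: "\<And>f. poly_deg_le t f \<Longrightarrow>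
              a * (\<integral>y. (f y)\<^sup>2 \<partial>sphere_measure) \<le> (\<integral>y. (f y)\<^sup>2 \<partial>\<mu>)"
    and r: "0 < r" "r \<le> pi / 2"
    and x: "x \<in> sphere 0 1"
    and supp: "measure_support \<mu> \<subseteq> cap x r"
  shows "(sin r) ^ (2 * t) \<ge>
           a / measure \<mu> (sphere 0 1) * (\<integral>y. (x \<bullet> y) ^ (2 * t) \<partial>sphere_measure)"
proof -
  interpret finite_measure \<mu> by (rule finite_mu)
  have nx: "norm x = 1" using x by simp
  have "2 \<le> DIM(real^'n)" using d_ge_1 by simp
  then obtain w :: "real^'n" where w: "w \<noteq> 0" "orthogonal x w"
    using orthogonal_to_vector_exists by blast
  define z where "z = w /\<^sub>R norm w"
  have nz: "norm z = 1" using w by (simp add: z_def)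
  have xz: "x \<bullet> z = 0" using w by (simp add: z_def orthogonal_def)
  obtain Q where Q: "orthogonal_transformation Q" "Q x = z"
    using orthogonal_transformation_exists[of x z] nx nz by auto
  define R where "R = inv Q"
  have R: "orthogonal_transformation R" unfolding R_def using Q(1) by (rule orthogonal_transformation_inv)
  have QR: "Q (R y) = y" for y
    unfolding R_def using orthogonal_transformation_surj[OF Q(1)] by (simp add: surj_f_inv_f)
  have zy: "z \<bullet> y = x \<bullet> R y" for y
  proof -
    have "z \<bullet> y = Q x \<bullet> Q (R y)" by (simp add: Q QR)
    also have "\<dots> = x \<bullet> R y" using Q(1) by (simp add: orthogonal_transformation_def)
    finally show ?thesis .
  qed
  let ?\<Lambda> = "\<integral>y. (x \<bullet> y) ^ (2 * t) \<partial>sphere_measure"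
  let ?s = "sin r ^ (2 * t)"
  have linR: "linear R" using R by (simp add: orthogonal_transformation_linear)
  have mR: "R \<in> measurable sphere_measure borel"
    using lin_meas[OF linR] by (simp add: measurable_cong_sets[OF sets_sphere refl])
  have int_eq: "(\<integral>y. (z \<bullet> y) ^ (2 * t) \<partial>sphere_measure) = ?\<Lambda>"
  proof -
    have "(\<integral>y. (z \<bullet> y) ^ (2 * t) \<partial>sphere_measure) = (\<integral>y. (x \<bullet> R y) ^ (2 * t) \<partial>sphere_measure)"
      by (simp add: zy)
    also have "\<dots> = (\<integral>y. (x \<bullet> y) ^ (2 * t) \<partial>distr sphere_measure borel R)"
      by (rule integral_distr[symmetric, OF mR]) simp
    also have "\<dots> = ?\<Lambda>" by (simp add: distr_sphere_orth[OF R])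
    finally show ?thesis .
  qed
  have poly: "poly_deg_le t (\<lambda>y. (z \<bullet> y) ^ t)" by (rule poly_power_lin)
  have sq: "((z \<bullet> y) ^ t)\<^sup>2 = (z \<bullet> y) ^ (2 * t)" for y
    by (simp add: power_mult[symmetric] mult.commute)
  have step1: "a * ?\<Lambda> \<le> (\<integral>y. (z \<bullet> y) ^ (2 * t) \<partial>\<mu>)"
    using MZ[OF poly] by (simp add: sq int_eq)
  have AEcap: "AE y in \<mu>. y \<in> cap x r"
    using support_AE[OF borel_mu] supp by (auto elim!: AE_mp)
  have AEb: "AE y in \<mu>. (z \<bullet> y) ^ (2 * t) \<le> ?s"
    using AEcap by eventually_elim (rule cap_bound[OF nx nz xz r])
  have s0: "0 \<le> sin r" using r by (intro sin_ge_zero) auto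
  have mf: "(\<lambda>y. (z \<bullet> y) ^ (2 * t)) \<in> borel_measurable \<mu>"
    by (simp add: measurable_cong_sets[OF borel_mu refl])
  have intf: "integrable \<mu> (\<lambda>y. (z \<bullet> y) ^ (2 * t))"
  proof (rule integrable_const_bound[where B="?s"])
    show "AE y in \<mu>. norm ((z \<bullet> y) ^ (2 * t)) \<le> ?s"
      using AEb by (auto elim!: AE_mp intro!: AE_I2 simp: power_mult)
  qed (rule mf)
  have "(\<integral>y. (z \<bullet> y) ^ (2 * t) \<partial>\<mu>) \<le> (\<integral>y. ?s \<partial>\<mu>)"
    by (rule integral_mono_AE[OF intf _ AEb]) simp
  also have "\<dots> = measure \<mu> (space \<mu>) * ?s" by simp
  also have "space \<mu> = sphere 0 1 \<union> (UNIV - sphere 0 1)"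
    using sets_eq_imp_space_eq[OF borel_mu] by auto
  also have "measure \<mu> \<dots> = measure \<mu> (sphere 0 1)"
    using on_sphere borel_mu by (intro measure_Un_null_set) (auto intro: null_setsI)
  finally have main: "a * ?\<Lambda> \<le> measure \<mu> (sphere 0 1) * ?s" using step1 by linarith
  show ?thesis
  proof (cases "measure \<mu> (sphere 0 1) = 0")
    case True then show ?thesis using s0 by simp
  next
    case False
    then have "measure \<mu> (sphere 0 1) > 0" by (simp add: zero_less_measure_iff)
    then show ?thesis using main by (simp add: field_simps mult.commute)
  qed
qed

end
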